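(* Let $\mathcal{G}$ be a graph class and let $G$ be a graph with $G\notin\mathcal{G}$. Let $\mathcal{M}$ be a $\mathcal{G}$-modular partition of $G$ and let $\mathcal{M}^*$ be the maximal modular partition of $G$. Then: (i) if $G$ or $\overline{G}$ is disconnected, then for any $M\in\mathcal{M}$ and $M'\in\mathcal{M}^*$, $M\cap M'\in\{M,M',\emptyset\}$; (ii) if $G$ and $\overline{G}$ are both connected, then for every $M\in\mathcal{M}$ there is $M'\in\mathcal{M}^*$ with $M\subseteq M'$.
   Context: A graph class is a (possibly infinite) set of graphs containing at least one non-empty graph. A module of $G=(V,E)$ is a set $M\subseteq V$ such that each $v\in V\setminus M$ is adjacent to all or to none of the vertices of $M$. A module $M$ is strong if for every module $M'$, either $M\subseteq M'$, $M'\subseteq M$ or $M\cap M'=\emptyset$; it is maximal if $M\subsetneq V$ and no module $M'$ satisfies $M\subsetneq M'\subsetneq V$. The maximal modular partition of $G$ is the unique partition of $V$ into maximal strong modules. A module $M$ is a $\mathcal{G}$-module if $G[M]\in\mathcal{G}$; a $\mathcal{G}$-modular partition of $G$ is a partition of $V(G)$ into $\mathcal{G}$-modules. $\overline{G}$ is the complement of $G$. *)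

theory Defs
  imports Main "HOL-Library.Disjoint_Sets"
begin

type_synonym 'a graph = "'a set \<times> ('a \<times> 'a) set"

definition verts :: "'a graph \<Rightarrow> 'a set" where "verts G = fst G"
definition edges :: "'a graph \<Rightarrow> ('a \<times> 'a) set" where "edges G = snd G"

definition wf_graph :: "'a graph \<Rightarrow> bool" where
  "wf_graph G \<longleftrightarrow> finite (verts G) \<and> edges G \<subseteq> verts G \<times> verts G
     \<and> sym (edges G) \<and> irrefl (edges G)"

definition adj :: "'a graph \<Rightarrow> 'a \<Rightarrow> 'a \<Rightarrow> bool" where
  "adj G u v \<longleftrightarrow> (u, v) \<in> edges G"

definition induced :: "'a graph \<Rightarrow> 'a set \<Rightarrow> 'a graph" where
  "induced G M = (M, edges G \<inter> (M \<times> M))"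

definition complement :: "'a graph \<Rightarrow> 'a graph" where
  "complement G = (verts G,
     {(u, v). u \<in> verts G \<and> v \<in> verts G \<and> u \<noteq> v \<and> (u, v) \<notin> edges G})"

definition connected_graph :: "'a graph \<Rightarrow> bool" where
  "connected_graph G \<longleftrightarrow> verts G \<noteq> {} \<and>
     (\<forall>u\<in>verts G. \<forall>v\<in>verts G. (u, v) \<in> (edges G)\<^sup>*)"

definition graph_class :: "'a graph set \<Rightarrow> bool" where
  "graph_class \<G> \<longleftrightarrow> (\<exists>H\<in>\<G>. wf_graph H \<and> verts H \<noteq> {})"

definition is_module :: "'a graph \<Rightarrow> 'a set \<Rightarrow> bool" where
  "is_module G M \<longleftrightarrow> M \<subseteq> verts G \<and>
     (\<forall>v\<in>verts G - M. (\<forall>x\<in>M. adj G v x) \<or> (\<forall>x\<in>M. \<not> adj G v x))"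

definition strong_module :: "'a graph \<Rightarrow> 'a set \<Rightarrow> bool" where
  "strong_module G M \<longleftrightarrow> is_module G M \<and>
     (\<forall>M'. is_module G M' \<longrightarrow> M \<subseteq> M' \<or> M' \<subseteq> M \<or> M \<inter> M' = {})"

definition maximal_strong_module :: "'a graph \<Rightarrow> 'a set \<Rightarrow> bool" where
  "maximal_strong_module G M \<longleftrightarrow> strong_module G M \<and> M \<subset> verts G \<and>
     \<not> (\<exists>M'. strong_module G M' \<and> M \<subset> M' \<and> M' \<subset> verts G)"

definition maximal_modular_partition :: "'a graph \<Rightarrow> 'a set set \<Rightarrow> bool" where
  "maximal_modular_partition G P \<longleftrightarrow> partition_on (verts G) P \<and>
     (\<forall>M\<in>P. maximal_strong_module G M)"

definition class_module :: "'a graph set \<Rightarrow> 'a graph \<Rightarrow> 'a set \<Rightarrow> bool" where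
  "class_module \<G> G M \<longleftrightarrow> is_module G M \<and> induced G M \<in> \<G>"

definition class_modular_partition :: "'a graph set \<Rightarrow> 'a graph \<Rightarrow> 'a set set \<Rightarrow> bool" where
  "class_modular_partition \<G> G P \<longleftrightarrow> partition_on (verts G) P \<and>
     (\<forall>M\<in>P. class_module \<G> G M)"

end

theory Submission
  imports Defs
begin

lemma closed_rtrancl:
  assumes "(u, w) \<in> R\<^sup>*" "u \<in> S" "\<And>a b. (a, b) \<in> R \<Longrightarrow> a \<in> S \<Longrightarrow> b \<in> S"
  shows "w \<in> S"
  using assms by (induction rule: rtrancl_induct) auto

lemma module_union:
  assumes "is_module G A" "is_module G B" "A \<inter> B \<noteq> {}"
  shows "is_module G (A \<union> B)"
proof -
  obtain z where z: "z \<in> A" "z \<in> B" using assms(3) by blast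
  show ?thesis unfolding is_module_def
  proof (intro conjI ballI)
    show "A \<union> B \<subseteq> verts G" using assms unfolding is_module_def by blast
  next
    fix v assume v: "v \<in> verts G - (A \<union> B)"
    have a: "(\<forall>x\<in>A. adj G v x) \<or> (\<forall>x\<in>A. \<not> adj G v x)" using assms(1) v unfolding is_module_def by blast
    have b: "(\<forall>x\<in>B. adj G v x) \<or> (\<forall>x\<in>B. \<not> adj G v x)" using assms(2) v unfolding is_module_def by blast
    show "(\<forall>x\<in>A \<union> B. adj G v x) \<or> (\<forall>x\<in>A \<union> B. \<not> adj G v x)"
      using a b z by blast
  qed
qed

lemma overlap_cover_disconnected:
  assumes wf: "wf_graph G" and mA: "is_module G A" and mB: "is_module G B"
    and cov: "A \<union> B = verts G" and x0: "x0 \<in> A - B" and y0: "y0 \<in> B - A"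
  shows "\<not> connected_graph G \<or> \<not> connected_graph (complement G)"
proof -
  have symE: "\<And>u v. adj G u v = adj G v u" using wf unfolding wf_graph_def sym_def adj_def by blast
  have xB: "\<And>x. x \<in> A - B \<Longrightarrow> (\<forall>z\<in>B. adj G x z) \<or> (\<forall>z\<in>B. \<not> adj G x z)"
    using mB cov unfolding is_module_def by blast
  have yA: "\<And>y. y \<in> B - A \<Longrightarrow> (\<forall>z\<in>A. adj G y z) \<or> (\<forall>z\<in>A. \<not> adj G y z)"
    using mA cov unfolding is_module_def by blast
  define c where "c = adj G x0 y0"
  have X: "\<And>x z. x \<in> A - B \<Longrightarrow> z \<in> B \<Longrightarrow> adj G x z = c"
  proof -
    fix x z assume x: "x \<in> A - B" and z: "z \<in> B"
    have "adj G x y0 = adj G y0 x" using symE by blast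
    also have "\<dots> = adj G y0 x0" using yA[OF y0] x x0 by blast
    also have "\<dots> = c" using symE c_def by blast
    finally have "adj G x y0 = c" .
    then show "adj G x z = c" using xB[OF x] z y0 by blast
  qed
  have y0V: "y0 \<in> verts G" "x0 \<in> verts G" using cov x0 y0 by auto
  show ?thesis
  proof (cases c)
    case True
    have "(x0, y0) \<notin> (edges (complement G))\<^sup>*"
    proof
      assume "(x0, y0) \<in> (edges (complement G))\<^sup>*"
      then have "y0 \<in> A - B"
      proof (rule closed_rtrancl)
        show "x0 \<in> A - B" by fact
        fix a b assume ab: "(a, b) \<in> edges (complement G)" "a \<in> A - B"
        then have "b \<in> verts G" "\<not> adj G a b"
          unfolding complement_def edges_def verts_def adj_def by auto
        then show "b \<in> A - B" using X[OF ab(2)] True cov by blast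
      qed
      then show False using y0 by blast
    qed
    then have "\<not> connected_graph (complement G)"
      using y0V unfolding connected_graph_def complement_def verts_def by (auto simp: edges_def)
    then show ?thesis by blast
  next
    case False
    have "(x0, y0) \<notin> (edges G)\<^sup>*"
    proof
      assume "(x0, y0) \<in> (edges G)\<^sup>*"
      then have "y0 \<in> A - B"
      proof (rule closed_rtrancl)
        show "x0 \<in> A - B" by fact
        fix a b assume ab: "(a, b) \<in> edges G" "a \<in> A - B"
        then have "b \<in> verts G" "adj G a b"
          using wf unfolding wf_graph_def adj_def by auto
        then show "b \<in> A - B" using X[OF ab(2)] False cov by blast
      qed
      then show False using y0 by blast
    qed
    then have "\<not> connected_graph G"
      using y0V unfolding connected_graph_def by auto
    then show ?thesis by blast
  qed
qed

theorem lemma3: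
  fixes \<G> :: "'a graph set" and G :: "'a graph" and \<M> \<M>s :: "'a set set"
  assumes "graph_class \<G>"
    and "wf_graph G"
    and "G \<notin> \<G>"
    and "class_modular_partition \<G> G \<M>"
    and "maximal_modular_partition G \<M>s"
  shows "(\<not> connected_graph G \<or> \<not> connected_graph (complement G) \<longrightarrow>
            (\<forall>M\<in>\<M>. \<forall>M'\<in>\<M>s. M \<inter> M' \<in> {M, M', {}}))
       \<and> (connected_graph G \<and> connected_graph (complement G) \<longrightarrow>
            (\<forall>M\<in>\<M>. \<exists>M'\<in>\<M>s. M \<subseteq> M'))"
proof (intro conjI impI ballI)
  fix M M' assume M: "M \<in> \<M>" and M': "M' \<in> \<M>s"
  have "is_module G M" using M assms(4) unfolding class_modular_partition_def class_module_def by blast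
  moreover have "strong_module G M'" using M' assms(5)
    unfolding maximal_modular_partition_def maximal_strong_module_def by blast
  ultimately have "M' \<subseteq> M \<or> M \<subseteq> M' \<or> M' \<inter> M = {}" unfolding strong_module_def by blast
  then show "M \<inter> M' \<in> {M, M', {}}" by blast
next
  fix M assume conn: "connected_graph G \<and> connected_graph (complement G)" and M: "M \<in> \<M>"
  have mM: "is_module G M" and iM: "induced G M \<in> \<G>"
    using M assms(4) unfolding class_modular_partition_def class_module_def by blast+
  have MV: "M \<subseteq> verts G" "M \<noteq> {}"
    using M assms(4) unfolding class_modular_partition_def partition_on_def by auto
  have "M \<noteq> verts G"
  proof
    assume "M = verts G"
    then have "induced G M = G" using assms(2)
      unfolding induced_def wf_graph_def verts_def edges_def by (cases G) auto
    then show False using iM assms(3) by simp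
  qed
  define S where "S = {N. is_module G N \<and> M \<subseteq> N \<and> N \<subset> verts G}"
  have finS: "finite S" using assms(2) unfolding S_def wf_graph_def
    by (rule_tac finite_subset[of _ "Pow (verts G)"]) auto
  have "M \<in> S" using mM MV \<open>M \<noteq> verts G\<close> unfolding S_def by auto
  then obtain N where N: "N \<in> S" and Nmax: "\<And>b. b \<in> S \<Longrightarrow> N \<le> b \<Longrightarrow> N = b"
    using finite_has_maximal[OF finS] by blast
  have mN: "is_module G N" "M \<subseteq> N" "N \<subset> verts G" using N unfolding S_def by auto
  have sN: "strong_module G N" unfolding strong_module_def
  proof (intro conjI allI impI)
    show "is_module G N" by fact
    fix K assume K: "is_module G K"
    show "N \<subseteq> K \<or> K \<subseteq> N \<or> N \<inter> K = {}"
    proof (rule ccontr)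
      assume ov: "\<not> (N \<subseteq> K \<or> K \<subseteq> N \<or> N \<inter> K = {})"
      have mU: "is_module G (N \<union> K)" using module_union[OF mN(1) K] ov by blast
      show False
      proof (cases "N \<union> K = verts G")
        case True
        obtain x0 where "x0 \<in> N - K" using ov by blast
        moreover obtain y0 where "y0 \<in> K - N" using ov by blast
        ultimately show False using overlap_cover_disconnected[OF assms(2) mN(1) K True] conn by blast
      next
        case False
        have "N \<union> K \<in> S" using mU mN False unfolding S_def is_module_def by auto
        then have "N = N \<union> K" using Nmax by blast
        then show False using ov by blast
      qed
    qed
  qed
  obtain z where z: "z \<in> M" using MV by blast
  then have "z \<in> verts G" using MV by blast
  then obtain Q where Q: "Q \<in> \<M>s" "z \<in> Q" using assms(5)
    unfolding maximal_modular_partition_def partition_on_def by blast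
  have mQ: "maximal_strong_module G Q" using Q assms(5) unfolding maximal_modular_partition_def by blast
  then have "is_module G Q" unfolding maximal_strong_module_def strong_module_def by blast
  then have "N \<subseteq> Q \<or> Q \<subseteq> N \<or> N \<inter> Q = {}" using sN unfolding strong_module_def by blast
  moreover have "N \<inter> Q \<noteq> {}" using z Q mN by blast
  moreover have "\<not> Q \<subset> N" using mQ sN mN unfolding maximal_strong_module_def by blast
  ultimately have "N \<subseteq> Q" by blast
  then show "\<exists>M'\<in>\<M>s. M \<subseteq> M'" using Q mN by blast
qed

end
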